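(* Suppose that $G$ is a finite solvable group acted on by automorphisms by an elementary abelian $p$-group $A$ with $|A|\geq p^3$. If this action is good and $C_G(a)$ is abelian for every nonidentity $a\in A$, then $G$ is abelian.
   Context: If a group $A$ acts on a group $G$ by automorphisms, the action is called good if $H=[H,B]C_H(B)$ for every subgroup $B\le A$ and every $B$-invariant subgroup $H\le G$. *)

theory Defs
  imports "HOL-Algebra.Algebra"
begin

definition fixed_points ::
  "('a, 'c) monoid_scheme \<Rightarrow> ('b \<Rightarrow> 'a \<Rightarrow> 'a) \<Rightarrow> 'b set \<Rightarrow> 'a set \<Rightarrow> 'a set" where
  "fixed_points G phi B H = {h \<in> H. \<forall>b \<in> B. phi b h = h}"

definition action_commutator ::
  "('a, 'c) monoid_scheme \<Rightarrow> ('b \<Rightarrow> 'a \<Rightarrow> 'a) \<Rightarrow> 'a set \<Rightarrow> 'b set \<Rightarrow> 'a set" where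
  "action_commutator G phi H B =
     generate G {inv\<^bsub>G\<^esub> h \<otimes>\<^bsub>G\<^esub> phi b h | h b. h \<in> H \<and> b \<in> B}"

definition good_action ::
  "('a, 'c) monoid_scheme \<Rightarrow> ('b, 'd) monoid_scheme \<Rightarrow> ('b \<Rightarrow> 'a \<Rightarrow> 'a) \<Rightarrow> bool" where
  "good_action G A phi \<longleftrightarrow>
     (\<forall>B H. subgroup B A \<longrightarrow> subgroup H G \<longrightarrow> (\<forall>b \<in> B. phi b ` H \<subseteq> H) \<longrightarrow>
        H = action_commutator G phi H B <#>\<^bsub>G\<^esub> fixed_points G phi B H)"

end

theory Submission
  imports Defs
begin


lemma finprod_hom_comm:
  assumes Q: "comm_group Q" and f: "f \<in> hom Q Q" and I: "finite I" and g: "g \<in> I \<rightarrow> carrier Q"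
  shows "f (finprod Q g I) = finprod Q (\<lambda>i. f (g i)) I"
  using I g
proof (induction I rule: finite_induct)
  case empty
  interpret comm_group Q by fact
  interpret group_hom Q Q f using f by (simp add: group_hom_def group_hom_axioms_def is_group)
  show ?case by simp
next
  case (insert x F)
  interpret comm_group Q by fact
  interpret group_hom Q Q f using f by (simp add: group_hom_def group_hom_axioms_def is_group)
  have gF: "g \<in> F \<rightarrow> carrier Q" using insert by auto
  have gx: "g x \<in> carrier Q" using insert by auto
  have fgF: "(\<lambda>i. f (g i)) \<in> F \<rightarrow> carrier Q" using gF f by (auto simp: hom_def Pi_def)
  show ?case using insert gF gx fgF
    by (simp add: finprod_insert)
qed

lemma finprod_swap:
  assumes Q: "comm_group Q" and I: "finite I" and J: "finite J"
    and f: "\<And>i j. i \<in> I \<Longrightarrow> j \<in> J \<Longrightarrow> f i j \<in> carrier Q"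
  shows "finprod Q (\<lambda>j. finprod Q (\<lambda>i. f i j) I) J = finprod Q (\<lambda>i. finprod Q (\<lambda>j. f i j) J) I"
  using J f
proof (induction J rule: finite_induct)
  case empty
  interpret comm_group Q by fact
  show ?case by simp
next
  case (insert x F)
  interpret comm_group Q by fact
  have 1: "finprod Q (\<lambda>j. finprod Q (\<lambda>i. f i j) I) (insert x F)
     = finprod Q (\<lambda>i. f i x) I \<otimes>\<^bsub>Q\<^esub> finprod Q (\<lambda>j. finprod Q (\<lambda>i. f i j) I) F"
    using insert by (intro finprod_insert) (auto intro!: finprod_closed)
  have 2: "finprod Q (\<lambda>j. finprod Q (\<lambda>i. f i j) I) F = finprod Q (\<lambda>i. finprod Q (\<lambda>j. f i j) F) I"
    using insert by auto
  have 3: "finprod Q (\<lambda>i. f i x) I \<otimes>\<^bsub>Q\<^esub> finprod Q (\<lambda>i. finprod Q (\<lambda>j. f i j) F) I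
     = finprod Q (\<lambda>i. f i x \<otimes>\<^bsub>Q\<^esub> finprod Q (\<lambda>j. f i j) F) I"
    using insert by (intro finprod_multf[symmetric]) (auto intro!: finprod_closed)
  have 4: "\<And>i. i \<in> I \<Longrightarrow> f i x \<otimes>\<^bsub>Q\<^esub> finprod Q (\<lambda>j. f i j) F = finprod Q (\<lambda>j. f i j) (insert x F)"
    using insert by (intro finprod_insert[symmetric]) auto
  show ?case unfolding 1 2 3 
    by (rule finprod_cong') (use 4 insert in \<open>auto intro!: finprod_closed\<close>)
qed

lemma finprod_bij_reindex:
  assumes Q: "comm_group Q" and h: "bij_betw h S S" and f: "f \<in> S \<rightarrow> carrier Q"
  shows "finprod Q (\<lambda>k. f (h k)) S = finprod Q f S"
proof -
  interpret comm_group Q by fact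
  have "finprod Q f (h ` S) = finprod Q (\<lambda>k. f (h k)) S"
    using h f by (intro finprod_reindex) (auto simp: bij_betw_def)
  thus ?thesis using h by (simp add: bij_betw_def)
qed

lemma shift_bij: assumes "0 < (p::nat)" shows "bij_betw (\<lambda>k. Suc k mod p) {..<p} {..<p}"
proof -
  have inj: "inj_on (\<lambda>k. Suc k mod p) {..<p}"
  proof (rule inj_onI)
    fix j k assume "j \<in> {..<p}" "k \<in> {..<p}" "Suc j mod p = Suc k mod p"
    thus "j = k" by (cases "Suc j = p"; cases "Suc k = p") auto
  qed
  have sub: "(\<lambda>k. Suc k mod p) ` {..<p} \<subseteq> {..<p}" using assms by auto
  have "(\<lambda>k. Suc k mod p) ` {..<p} = {..<p}" using endo_inj_surj[OF _ sub inj] by simp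
  thus ?thesis using inj by (simp add: bij_betw_def)
qed

lemma mult_bij:
  assumes p: "Factorial_Ring.prime (p::nat)" and i: "0 < i" "i < p"
  shows "bij_betw (\<lambda>j. (i*j) mod p) {..<p} {..<p}"
proof -
  have inj: "inj_on (\<lambda>j. (i*j) mod p) {..<p}"
  proof (rule inj_onI)
    fix j j' assume j: "j \<in> {..<p}" "j' \<in> {..<p}" and e: "(i*j) mod p = (i*j') mod p"
    have key: "j = j'" if "j \<le> j'" "j < p" "j' < p" "(i*j) mod p = (i*j') mod p" for j j'
    proof -
      have le: "i*j \<le> i*j'" using that by simp
      have "p dvd i*j' - i*j" using mod_eq_dvd_iff_nat[OF le] that(4)[symmetric] by simp
      hence "p dvd i * (j' - j)" by (simp add: right_diff_distrib')
      hence "p dvd i \<or> p dvd (j' - j)" using p prime_dvd_mult_iff by blast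
      moreover have "\<not> p dvd i" using i by (auto dest: dvd_imp_le)
      ultimately have "p dvd (j' - j)" by blast
      show ?thesis
      proof (rule ccontr)
        assume "j \<noteq> j'"
        hence "0 < j' - j" "j' - j < p" using that by auto
        thus False using \<open>p dvd (j' - j)\<close> nat_dvd_not_less by blast
      qed
    qed
    show "j = j'" using key[of j j'] key[of j' j] j e by (cases "j \<le> j'") auto
  qed
  have sub: "(\<lambda>j. (i*j) mod p) ` {..<p} \<subseteq> {..<p}" using p prime_gt_0_nat by auto
  have "(\<lambda>j. (i*j) mod p) ` {..<p} = {..<p}" using endo_inj_surj[OF _ sub inj] by simp
  thus ?thesis using inj by (simp add: bij_betw_def)
qed

lemma pow_mod_p:
  assumes "monoid A" "x \<in> carrier A" "x [^]\<^bsub>A\<^esub> (p::nat) = \<one>\<^bsub>A\<^esub>"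
  shows "x [^]\<^bsub>A\<^esub> n = x [^]\<^bsub>A\<^esub> (n mod p)"
proof -
  interpret monoid A by fact
  have 1: "x [^]\<^bsub>A\<^esub> (p * k) = \<one>\<^bsub>A\<^esub>" for k
    using assms by (simp add: nat_pow_pow[symmetric])
  have "x [^]\<^bsub>A\<^esub> n = x [^]\<^bsub>A\<^esub> (p * (n div p) + n mod p)" using div_mult_mod_eq[of n p] by (simp add: mult.commute)
  also have "\<dots> = x [^]\<^bsub>A\<^esub> (p * (n div p)) \<otimes>\<^bsub>A\<^esub> x [^]\<^bsub>A\<^esub> (n mod p)"
    using assms by (simp add: nat_pow_mult)
  also have "\<dots> = x [^]\<^bsub>A\<^esub> (n mod p)" using assms 1 by simp
  finally show ?thesis .
qed

lemma mod_inverse_exists: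
  assumes p: "Factorial_Ring.prime (p::nat)" and m: "0 < m" "m < p"
  shows "\<exists>k. (m * k) mod p = 1"
proof -
  have "coprime m p" using p m
    by (metis dvd_imp_le not_le prime_imp_coprime_nat coprime_commute)
  hence g: "gcd m p = 1" by simp
  obtain x y where "m * x = p * y + gcd m p" using bezout_nat[of m p] m by auto
  hence "m * x = p * y + 1" using g by simp
  moreover have "p > 1" using p prime_gt_1_nat by blast
  ultimately have "(m * x) mod p = 1" by (metis mod_mult_self4 mod_less)
  thus ?thesis by blast
qed




locale psi_act = Q: comm_group Q + A: comm_group A
  for Q :: "('q, 'e) monoid_scheme" and A :: "('b, 'd) monoid_scheme" +
  fixes psi :: "'b \<Rightarrow> 'q \<Rightarrow> 'q" and p :: nat
  assumes finQ: "finite (carrier Q)"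
    and p: "Factorial_Ring.prime p"
    and expA: "\<forall>x\<in>carrier A. x [^]\<^bsub>A\<^esub> p = \<one>\<^bsub>A\<^esub>"
    and hom: "\<forall>x\<in>carrier A. psi x \<in> hom Q Q"
    and comp: "\<forall>x\<in>carrier A. \<forall>y\<in>carrier A. \<forall>q\<in>carrier Q. psi (x \<otimes>\<^bsub>A\<^esub> y) q = psi x (psi y q)"
    and one: "\<forall>q\<in>carrier Q. psi \<one>\<^bsub>A\<^esub> q = q"
begin

lemma cgQ: "comm_group Q" by unfold_locales

lemma p0: "0 < p" using p prime_gt_0_nat by blast

lemma psi_closed: "x \<in> carrier A \<Longrightarrow> q \<in> carrier Q \<Longrightarrow> psi x q \<in> carrier Q"
  using hom by (auto simp: hom_def)

lemma psi_mult: "x \<in> carrier A \<Longrightarrow> q \<in> carrier Q \<Longrightarrow> r \<in> carrier Q \<Longrightarrow> psi x (q \<otimes>\<^bsub>Q\<^esub> r) = psi x q \<otimes>\<^bsub>Q\<^esub> psi x r"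
  using hom by (auto simp: hom_def)

lemma psi_one: "x \<in> carrier A \<Longrightarrow> psi x \<one>\<^bsub>Q\<^esub> = \<one>\<^bsub>Q\<^esub>"
proof -
  assume x: "x \<in> carrier A"
  interpret group_hom Q Q "psi x" using hom x by (simp add: group_hom_def group_hom_axioms_def Q.is_group)
  show ?thesis by simp
qed

lemma pow_mod: "x \<in> carrier A \<Longrightarrow> x [^]\<^bsub>A\<^esub> n = x [^]\<^bsub>A\<^esub> (n mod p)"
  using pow_mod_p[of A x p n] expA A.monoid_axioms by auto

lemma psi_pow_fix: "d \<in> carrier A \<Longrightarrow> q \<in> carrier Q \<Longrightarrow> psi d q = q \<Longrightarrow> psi (d [^]\<^bsub>A\<^esub> (k::nat)) q = q"
proof (induction k)
  case 0 thus ?case using one by simp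
next
  case (Suc k)
  have "psi (d [^]\<^bsub>A\<^esub> Suc k) q = psi (d [^]\<^bsub>A\<^esub> k) (psi d q)"
    using Suc.prems comp by simp
  thus ?case using Suc by simp
qed

definition fpf where "fpf c \<longleftrightarrow> (\<forall>q\<in>carrier Q. psi c q = q \<longrightarrow> q = \<one>\<^bsub>Q\<^esub>)"

lemma fpf_pow:
  assumes c: "c \<in> carrier A" and fc: "fpf c" and m: "0 < m" "m < p"
  shows "fpf (c [^]\<^bsub>A\<^esub> m)"
  unfolding fpf_def
proof (intro ballI impI)
  fix q assume q: "q \<in> carrier Q" and e: "psi (c [^]\<^bsub>A\<^esub> m) q = q"
  obtain k where k: "(m * k) mod p = 1" using mod_inverse_exists[OF p m] by blast
  have "psi ((c [^]\<^bsub>A\<^esub> m) [^]\<^bsub>A\<^esub> k) q = q"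
    using psi_pow_fix[OF _ q e] c by simp
  moreover have "(c [^]\<^bsub>A\<^esub> m) [^]\<^bsub>A\<^esub> k = c"
    using c k pow_mod[of c "m*k"] by (simp add: A.nat_pow_pow)
  ultimately show "q = \<one>\<^bsub>Q\<^esub>" using fc q by (simp add: fpf_def)
qed

lemma norm_one:
  assumes c: "c \<in> carrier A" and fc: "fpf c" and q: "q \<in> carrier Q"
  shows "finprod Q (\<lambda>i. psi (c [^]\<^bsub>A\<^esub> i) q) {..<p} = \<one>\<^bsub>Q\<^esub>"
proof -
  let ?f = "\<lambda>i. psi (c [^]\<^bsub>A\<^esub> i) q"
  have fQ: "?f \<in> {..<p} \<rightarrow> carrier Q" using c q by (auto intro: psi_closed)
  have "psi c (finprod Q ?f {..<p}) = finprod Q (\<lambda>i. psi c (?f i)) {..<p}"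
    using finprod_hom_comm[OF cgQ _ _ fQ] hom c by auto
  also have "\<dots> = finprod Q (\<lambda>i. ?f (Suc i mod p)) {..<p}"
  proof (rule Q.finprod_cong')
    show "(\<lambda>i. ?f (Suc i mod p)) \<in> {..<p} \<rightarrow> carrier Q" using fQ p0 by auto
    fix i assume "i \<in> {..<p}"
    have "psi c (?f i) = psi (c \<otimes>\<^bsub>A\<^esub> c [^]\<^bsub>A\<^esub> i) q" using comp c q by simp
    also have "\<dots> = psi (c [^]\<^bsub>A\<^esub> Suc i) q" using c by (simp add: A.m_comm)
    also have "\<dots> = ?f (Suc i mod p)" using pow_mod[OF c, of "Suc i"] by simp
    finally show "psi c (?f i) = ?f (Suc i mod p)" .
  qed simp
  also have "\<dots> = finprod Q ?f {..<p}"
    by (rule finprod_bij_reindex[OF cgQ shift_bij[OF p0] fQ])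
  finally have "psi c (finprod Q ?f {..<p}) = finprod Q ?f {..<p}" .
  moreover have "finprod Q ?f {..<p} \<in> carrier Q" using fQ by simp
  ultimately show ?thesis using fc by (simp add: fpf_def)
qed

lemma exponent_p:
  assumes a: "a \<in> carrier A" and b: "b \<in> carrier A" and fb: "fpf b"
    and fab: "\<forall>j<p. fpf (a \<otimes>\<^bsub>A\<^esub> b [^]\<^bsub>A\<^esub> j)" and q: "q \<in> carrier Q"
  shows "q [^]\<^bsub>Q\<^esub> p = \<one>\<^bsub>Q\<^esub>"
proof -
  define F where "F i k = psi (a [^]\<^bsub>A\<^esub> i \<otimes>\<^bsub>A\<^esub> b [^]\<^bsub>A\<^esub> k) q" for i k :: nat
  have FQ: "F i k \<in> carrier Q" for i k using a b q by (simp add: F_def psi_closed)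
  have row: "finprod Q (\<lambda>i. F i ((i*j) mod p)) {..<p} = \<one>\<^bsub>Q\<^esub>" if j: "j < p" for j
  proof -
    have c: "a \<otimes>\<^bsub>A\<^esub> b [^]\<^bsub>A\<^esub> j \<in> carrier A" using a b by simp
    have "finprod Q (\<lambda>i. F i ((i*j) mod p)) {..<p}
        = finprod Q (\<lambda>i. psi ((a \<otimes>\<^bsub>A\<^esub> b [^]\<^bsub>A\<^esub> j) [^]\<^bsub>A\<^esub> i) q) {..<p}"
    proof (rule Q.finprod_cong')
      fix i assume "i \<in> {..<p}"
      have "(a \<otimes>\<^bsub>A\<^esub> b [^]\<^bsub>A\<^esub> j) [^]\<^bsub>A\<^esub> i = a [^]\<^bsub>A\<^esub> i \<otimes>\<^bsub>A\<^esub> (b [^]\<^bsub>A\<^esub> j) [^]\<^bsub>A\<^esub> i"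
        by (rule A.nat_pow_distrib) (use a b in auto)
      also have "(b [^]\<^bsub>A\<^esub> j) [^]\<^bsub>A\<^esub> i = b [^]\<^bsub>A\<^esub> ((i*j) mod p)"
        using pow_mod[of b "j*i"] b by (simp add: A.nat_pow_pow mult.commute)
      finally show "F i ((i*j) mod p) = psi ((a \<otimes>\<^bsub>A\<^esub> b [^]\<^bsub>A\<^esub> j) [^]\<^bsub>A\<^esub> i) q"
        by (simp add: F_def)
    qed (use c q in \<open>auto intro: psi_closed\<close>)
    also have "\<dots> = \<one>\<^bsub>Q\<^esub>" by (rule norm_one[OF c fab[rule_format, OF j] q])
    finally show ?thesis .
  qed
  let ?S = "{1..<p}"
  define R where "R = finprod Q (\<lambda>i. finprod Q (\<lambda>k. F i k) {..<p}) ?S"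
  have RQ: "R \<in> carrier Q" unfolding R_def by (auto intro!: Q.finprod_closed simp: FQ)
  have split: "{..<p} = insert 0 ?S" using p0 by auto
  have "finprod Q (\<lambda>j. finprod Q (\<lambda>i. F i ((i*j) mod p)) {..<p}) {..<p} = \<one>\<^bsub>Q\<^esub>"
    by (rule Q.finprod_one_eqI) (simp add: row)
  hence "\<one>\<^bsub>Q\<^esub> = finprod Q (\<lambda>j. finprod Q (\<lambda>i. F i ((i*j) mod p)) {..<p}) {..<p}" by simp
  also have "\<dots> = finprod Q (\<lambda>i. finprod Q (\<lambda>j. F i ((i*j) mod p)) {..<p}) {..<p}"
    by (rule finprod_swap[OF cgQ]) (auto simp: FQ)
  also have "\<dots> = finprod Q (\<lambda>j. F 0 0) {..<p} \<otimes>\<^bsub>Q\<^esub> finprod Q (\<lambda>i. finprod Q (\<lambda>j. F i ((i*j) mod p)) {..<p}) ?S"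
    unfolding split by (subst Q.finprod_insert) (auto simp: FQ)
  also have "finprod Q (\<lambda>j. F 0 0) {..<p} = q [^]\<^bsub>Q\<^esub> p"
  proof -
    have "F 0 0 = q" using q one by (simp add: F_def)
    thus ?thesis using Q.finprod_const[of q "{..<p}"] q by simp
  qed
  also have "finprod Q (\<lambda>i. finprod Q (\<lambda>j. F i ((i*j) mod p)) {..<p}) ?S = R"
    unfolding R_def
  proof (rule Q.finprod_cong')
    fix i assume i: "i \<in> ?S"
    show "finprod Q (\<lambda>j. F i ((i*j) mod p)) {..<p} = finprod Q (\<lambda>k. F i k) {..<p}"
      by (rule finprod_bij_reindex[OF cgQ mult_bij[OF p]]) (use i in \<open>auto simp: FQ\<close>)
  qed (auto intro!: Q.finprod_closed simp: FQ)
  finally have main: "\<one>\<^bsub>Q\<^esub> = q [^]\<^bsub>Q\<^esub> p \<otimes>\<^bsub>Q\<^esub> R" .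
  have "psi b R = finprod Q (\<lambda>i. psi b (finprod Q (\<lambda>k. F i k) {..<p})) ?S"
    unfolding R_def by (rule finprod_hom_comm[OF cgQ]) (use hom b in \<open>auto intro!: Q.finprod_closed simp: FQ\<close>)
  also have "\<dots> = R"
    unfolding R_def
  proof (rule Q.finprod_cong')
    fix i assume i: "i \<in> ?S"
    have "psi b (finprod Q (\<lambda>k. F i k) {..<p}) = finprod Q (\<lambda>k. psi b (F i k)) {..<p}"
      by (rule finprod_hom_comm[OF cgQ]) (use hom b in \<open>auto simp: FQ\<close>)
    also have "\<dots> = finprod Q (\<lambda>k. F i (Suc k mod p)) {..<p}"
    proof (rule Q.finprod_cong')
      fix k assume "k \<in> {..<p}"
      have "psi b (F i k) = psi (b \<otimes>\<^bsub>A\<^esub> (a [^]\<^bsub>A\<^esub> i \<otimes>\<^bsub>A\<^esub> b [^]\<^bsub>A\<^esub> k)) q"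
        using comp a b q by (simp add: F_def)
      also have "b \<otimes>\<^bsub>A\<^esub> (a [^]\<^bsub>A\<^esub> i \<otimes>\<^bsub>A\<^esub> b [^]\<^bsub>A\<^esub> k) = a [^]\<^bsub>A\<^esub> i \<otimes>\<^bsub>A\<^esub> b [^]\<^bsub>A\<^esub> Suc k"
        using a b by (simp add: A.m_ac)
      also have "b [^]\<^bsub>A\<^esub> Suc k = b [^]\<^bsub>A\<^esub> (Suc k mod p)" using pow_mod[OF b] by blast
      finally show "psi b (F i k) = F i (Suc k mod p)" by (simp add: F_def)
    qed (auto simp: FQ)
    also have "\<dots> = finprod Q (\<lambda>k. F i k) {..<p}"
      by (rule finprod_bij_reindex[OF cgQ shift_bij[OF p0]]) (auto simp: FQ)
    finally show "psi b (finprod Q (\<lambda>k. F i k) {..<p}) = finprod Q (\<lambda>k. F i k) {..<p}" .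
  qed (auto intro!: Q.finprod_closed simp: FQ)
  finally have "R = \<one>\<^bsub>Q\<^esub>" using fb RQ by (simp add: fpf_def)
  hence "\<one>\<^bsub>Q\<^esub> = q [^]\<^bsub>Q\<^esub> p \<otimes>\<^bsub>Q\<^esub> \<one>\<^bsub>Q\<^esub>" using main by simp
  thus ?thesis using q by simp
qed

lemma psi_pow_add:
  assumes b: "b \<in> carrier A" and q: "q \<in> carrier Q"
  shows "psi (b [^]\<^bsub>A\<^esub> (k::nat)) (psi (b [^]\<^bsub>A\<^esub> (i::nat)) q) = psi (b [^]\<^bsub>A\<^esub> (k + i)) q"
proof -
  have "psi (b [^]\<^bsub>A\<^esub> k \<otimes>\<^bsub>A\<^esub> b [^]\<^bsub>A\<^esub> i) q = psi (b [^]\<^bsub>A\<^esub> k) (psi (b [^]\<^bsub>A\<^esub> i) q)"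
    using comp b q by simp
  thus ?thesis using b by (simp add: A.nat_pow_mult)
qed

lemma trivial_Q:
  assumes a: "a \<in> carrier A" and b: "b \<in> carrier A" and fb: "fpf b"
    and fab: "\<forall>j<p. fpf (a \<otimes>\<^bsub>A\<^esub> b [^]\<^bsub>A\<^esub> j)"
  shows "carrier Q = {\<one>\<^bsub>Q\<^esub>}"
proof (rule ccontr)
  assume ne: "carrier Q \<noteq> {\<one>\<^bsub>Q\<^esub>}"
  then obtain q0 where q0: "q0 \<in> carrier Q" "q0 \<noteq> \<one>\<^bsub>Q\<^esub>" using Q.one_closed by blast
  have "q0 [^]\<^bsub>Q\<^esub> p = \<one>\<^bsub>Q\<^esub>" by (rule exponent_p[OF a b fb fab q0(1)])
  hence "Q.ord q0 dvd p" using Q.pow_eq_id q0 by simp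
  moreover have "Q.ord q0 \<noteq> 1" using Q.ord_eq_1 q0 by simp
  ultimately have "Q.ord q0 = p" using p unfolding prime_nat_iff by auto
  hence pdvd: "p dvd card (carrier Q)" using Q.ord_dvd_group_order[OF q0(1)] by (simp add: order_def)
  define orb where "orb q = (\<lambda>i. psi (b [^]\<^bsub>A\<^esub> i) q) ` {..<p}" for q
  let ?X = "carrier Q - {\<one>\<^bsub>Q\<^esub>}"
  have bp: "b [^]\<^bsub>A\<^esub> p = \<one>\<^bsub>A\<^esub>" using expA b by blast
  have orb_sub: "orb q \<subseteq> ?X" if q: "q \<in> ?X" for q
  proof
    fix t assume "t \<in> orb q"
    then obtain i where i: "i < p" "t = psi (b [^]\<^bsub>A\<^esub> i) q" unfolding orb_def by auto
    have tQ: "t \<in> carrier Q" using i b q psi_closed by simp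
    have "psi (b [^]\<^bsub>A\<^esub> (p - i)) t = q"
      using i q b psi_pow_add[of b q "p - i" i] bp one by simp
    hence "t \<noteq> \<one>\<^bsub>Q\<^esub>" using q b psi_one[of "b [^]\<^bsub>A\<^esub> (p - i)"] by auto
    thus "t \<in> ?X" using tQ by simp
  qed
  have self: "q \<in> orb q" if "q \<in> carrier Q" for q
    unfolding orb_def using p0 one that by (auto intro!: image_eqI[of _ _ 0])
  have inj: "inj_on (\<lambda>i. psi (b [^]\<^bsub>A\<^esub> i) q) {..<p}" if q: "q \<in> ?X" for q
  proof -
    have key: "False" if ij: "i < j" "j < p" and e: "psi (b [^]\<^bsub>A\<^esub> i) q = psi (b [^]\<^bsub>A\<^esub> j) q" for i j
    proof -
      have "psi (b [^]\<^bsub>A\<^esub> (p - j + i)) q = psi (b [^]\<^bsub>A\<^esub> (p - j)) (psi (b [^]\<^bsub>A\<^esub> i) q)"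
        using psi_pow_add[of b q "p - j" i] b q by simp
      also have "\<dots> = psi (b [^]\<^bsub>A\<^esub> (p - j)) (psi (b [^]\<^bsub>A\<^esub> j) q)" using e by simp
      also have "\<dots> = q" using psi_pow_add[of b q "p - j" j] b q ij bp one by simp
      finally have fix1: "psi (b [^]\<^bsub>A\<^esub> (p - j + i)) q = q" .
      have "fpf (b [^]\<^bsub>A\<^esub> (p - j + i))" by (rule fpf_pow[OF b fb]) (use ij in auto)
      thus False using fix1 q unfolding fpf_def by blast
    qed
    show ?thesis
    proof (rule inj_onI)
      fix i j assume "i \<in> {..<p}" "j \<in> {..<p}" "psi (b [^]\<^bsub>A\<^esub> i) q = psi (b [^]\<^bsub>A\<^esub> j) q"
      thus "i = j" using key[of i j] key[of j i] by (cases i j rule: linorder_cases) auto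
    qed
  qed
  have card: "card (orb q) = p" if "q \<in> ?X" for q
    unfolding orb_def using card_image[OF inj[OF that]] by simp
  have trans: "orb t = orb q" if q: "q \<in> ?X" and t: "t \<in> orb q" for q t
  proof -
    have tX: "t \<in> ?X" using orb_sub[OF q] t by blast
    obtain i where i: "i < p" "t = psi (b [^]\<^bsub>A\<^esub> i) q" using t unfolding orb_def by auto
    have "orb t \<subseteq> orb q"
    proof
      fix s assume "s \<in> orb t"
      then obtain k where k: "k < p" "s = psi (b [^]\<^bsub>A\<^esub> k) t" unfolding orb_def by auto
      have "s = psi (b [^]\<^bsub>A\<^esub> ((k + i) mod p)) q"
        using k i psi_pow_add[of b q k i] q b pow_mod[OF b, of "k+i"] by simp
      thus "s \<in> orb q" unfolding orb_def using p0 by auto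
    qed
    moreover have "finite (orb q)" unfolding orb_def by simp
    ultimately show ?thesis using card[OF q] card[OF tX] by (simp add: card_subset_eq)
  qed
  have union: "\<Union>(orb ` ?X) = ?X" using orb_sub self by blast
  have "p dvd card (\<Union>(orb ` ?X))"
  proof (rule dvd_partition)
    show "finite (\<Union>(orb ` ?X))" using union finQ by simp
    show "\<forall>c\<in>orb ` ?X. p dvd card c" using card by auto
    show "\<forall>c1\<in>orb ` ?X. \<forall>c2\<in>orb ` ?X. c1 \<noteq> c2 \<longrightarrow> c1 \<inter> c2 = {}"
      using trans by blast
  qed
  hence "p dvd card (carrier Q) - 1" using union by (simp add: card_Diff_singleton finQ)
  moreover have "card (carrier Q) \<ge> 1" using finQ q0 by (metis One_nat_def Suc_leI card_gt_0_iff empty_iff)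
  ultimately have "p dvd 1" using pdvd by (metis dvd_diff_nat diff_diff_cancel)
  thus False using p by simp
qed

end



lemma (in group) gen_comm_one:
  assumes S: "S \<subseteq> carrier G" and v: "v \<in> carrier G"
    and c: "\<forall>s\<in>S. s \<otimes> v = v \<otimes> s" and u: "u \<in> generate G S"
  shows "u \<otimes> v = v \<otimes> u"
  using u
proof (induction rule: generate.induct)
  case one
  show ?case using v by simp
next
  case (incl h) thus ?case using c by simp
next
  case (inv h)
  have h: "h \<in> carrier G" using inv S by auto
  have e: "h \<otimes> v = v \<otimes> h" using c inv by simp
  have "inv h \<otimes> v = inv h \<otimes> (v \<otimes> (h \<otimes> inv h))" using h v by simp
  also have "\<dots> = inv h \<otimes> ((v \<otimes> h) \<otimes> inv h)" using h v by (simp only: m_assoc inv_closed)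
  also have "\<dots> = inv h \<otimes> ((h \<otimes> v) \<otimes> inv h)" using e by simp
  also have "\<dots> = (inv h \<otimes> h) \<otimes> (v \<otimes> inv h)" using h v by (simp only: m_assoc inv_closed m_closed)
  also have "\<dots> = v \<otimes> inv h" using h v by simp
  finally show ?case .
next
  case (eng h1 h2)
  have h: "h1 \<in> carrier G" "h2 \<in> carrier G"
    using eng.hyps generate_in_carrier[OF S] by auto
  have "h1 \<otimes> h2 \<otimes> v = h1 \<otimes> (h2 \<otimes> v)" using h v by (simp add: m_assoc)
  also have "\<dots> = h1 \<otimes> (v \<otimes> h2)" using eng by simp
  also have "\<dots> = (h1 \<otimes> v) \<otimes> h2" using h v by (simp add: m_assoc)
  also have "\<dots> = (v \<otimes> h1) \<otimes> h2" using eng by simp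
  also have "\<dots> = v \<otimes> (h1 \<otimes> h2)" using h v by (simp add: m_assoc)
  finally show ?case .
qed

lemma (in group) gen_comm:
  assumes S: "S \<subseteq> carrier G"
    and c: "\<forall>s\<in>S. \<forall>t\<in>S. s \<otimes> t = t \<otimes> s"
    and u: "u \<in> generate G S" and v: "v \<in> generate G S"
  shows "u \<otimes> v = v \<otimes> u"
proof -
  have uc: "u \<in> carrier G" using generate_in_carrier[OF S u] .
  have "\<forall>s\<in>S. s \<otimes> u = u \<otimes> s"
  proof
    fix s assume s: "s \<in> S"
    have "u \<otimes> s = s \<otimes> u"
      by (rule gen_comm_one[OF S _ _ u]) (use s S c in auto)
    thus "s \<otimes> u = u \<otimes> s" by simp
  qed
  thus ?thesis using gen_comm_one[OF S uc _ v] by simp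
qed

locale main_ctx = G: group G + A: comm_group A
  for G :: "('a, 'c) monoid_scheme" and A :: "('b, 'd) monoid_scheme" +
  fixes phi :: "'b \<Rightarrow> 'a \<Rightarrow> 'a" and p :: nat
  assumes finG: "finite (carrier G)" and solv: "solvable G"
    and finA: "finite (carrier A)" and p: "Factorial_Ring.prime p"
    and expA: "\<forall>a \<in> carrier A. a [^]\<^bsub>A\<^esub> p = \<one>\<^bsub>A\<^esub>"
    and cardA: "card (carrier A) \<ge> p ^ 3"
    and phi: "phi \<in> hom A (AutoGroup G)"
    and good: "good_action G A phi"
    and cent: "\<forall>a \<in> carrier A. a \<noteq> \<one>\<^bsub>A\<^esub> \<longrightarrow>
           comm_group (G\<lparr>carrier := fixed_points G phi {a} (carrier G)\<rparr>)"
begin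

lemma p0: "0 < p" using p prime_gt_0_nat by blast
lemma p1: "1 < p" using p prime_gt_1_nat by blast

lemma phi_auto: "x \<in> carrier A \<Longrightarrow> phi x \<in> auto G"
  using phi by (auto simp: hom_def AutoGroup_def)

lemma phi_hom: "x \<in> carrier A \<Longrightarrow> phi x \<in> hom G G"
  using phi_auto by (simp add: auto_def)

lemma phi_closed: "x \<in> carrier A \<Longrightarrow> g \<in> carrier G \<Longrightarrow> phi x g \<in> carrier G"
  using phi_hom by (auto simp: hom_def)

lemma phi_mult: "x \<in> carrier A \<Longrightarrow> g \<in> carrier G \<Longrightarrow> h \<in> carrier G \<Longrightarrow>
    phi x (g \<otimes>\<^bsub>G\<^esub> h) = phi x g \<otimes>\<^bsub>G\<^esub> phi x h"
  using phi_hom by (auto simp: hom_def)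

lemma phi_inv: "x \<in> carrier A \<Longrightarrow> g \<in> carrier G \<Longrightarrow> phi x (inv\<^bsub>G\<^esub> g) = inv\<^bsub>G\<^esub> (phi x g)"
proof -
  assume x: "x \<in> carrier A" and g: "g \<in> carrier G"
  interpret group_hom G G "phi x" using phi_hom[OF x] by (simp add: group_hom_def group_hom_axioms_def G.is_group)
  show ?thesis using g by simp
qed

lemma phi_one_G: "x \<in> carrier A \<Longrightarrow> phi x \<one>\<^bsub>G\<^esub> = \<one>\<^bsub>G\<^esub>"
proof -
  assume x: "x \<in> carrier A"
  interpret group_hom G G "phi x" using phi_hom[OF x] by (simp add: group_hom_def group_hom_axioms_def G.is_group)
  show ?thesis by simp
qed

lemma phi_inj: "x \<in> carrier A \<Longrightarrow> inj_on (phi x) (carrier G)"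
  using phi_auto by (simp add: auto_def Bij_def bij_betw_def)

lemma phi_comp: "x \<in> carrier A \<Longrightarrow> y \<in> carrier A \<Longrightarrow> g \<in> carrier G \<Longrightarrow>
    phi (x \<otimes>\<^bsub>A\<^esub> y) g = phi x (phi y g)"
proof -
  assume x: "x \<in> carrier A" and y: "y \<in> carrier A" and g: "g \<in> carrier G"
  have "phi (x \<otimes>\<^bsub>A\<^esub> y) = phi x \<otimes>\<^bsub>AutoGroup G\<^esub> phi y" using phi x y by (simp add: hom_def)
  also have "\<dots> = compose (carrier G) (phi x) (phi y)"
    using phi_auto[OF x] phi_auto[OF y] by (simp add: AutoGroup_def BijGroup_def auto_def)
  finally show ?thesis using g by (simp add: compose_def)
qed

lemma phi_one: "g \<in> carrier G \<Longrightarrow> phi \<one>\<^bsub>A\<^esub> g = g"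
proof -
  assume g: "g \<in> carrier G"
  interpret AG: group "AutoGroup G" by (rule G.AutoGroup)
  interpret group_hom A "AutoGroup G" phi using phi by (simp add: group_hom_def group_hom_axioms_def A.is_group AG.is_group)
  have "phi \<one>\<^bsub>A\<^esub> = \<one>\<^bsub>AutoGroup G\<^esub>" by simp
  thus ?thesis using g by (simp add: AutoGroup_def BijGroup_def)
qed

lemma phi_commute: "x \<in> carrier A \<Longrightarrow> y \<in> carrier A \<Longrightarrow> g \<in> carrier G \<Longrightarrow>
    phi x (phi y g) = phi y (phi x g)"
  using phi_comp A.m_comm by metis

definition "Hyp = {B. subgroup B A \<and> card (carrier A) \<le> p * card B}"
definition "K = generate G (\<Union>B\<in>Hyp. fixed_points G phi B (carrier G))"

lemma hyp_meet:
  assumes B1: "B1 \<in> Hyp" and B2: "B2 \<in> Hyp"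
  shows "\<exists>a\<in>B1 \<inter> B2. a \<noteq> \<one>\<^bsub>A\<^esub>"
proof (rule ccontr)
  assume "\<not> ?thesis"
  hence triv: "\<And>z. z \<in> B1 \<Longrightarrow> z \<in> B2 \<Longrightarrow> z = \<one>\<^bsub>A\<^esub>" by blast
  have s1: "subgroup B1 A" and s2: "subgroup B2 A" and c1: "card (carrier A) \<le> p * card B1"
    and c2: "card (carrier A) \<le> p * card B2" using B1 B2 by (auto simp: Hyp_def)
  have sub1: "B1 \<subseteq> carrier A" and sub2: "B2 \<subseteq> carrier A" using s1 s2 subgroup.subset by auto
  let ?f = "\<lambda>(x, y). x \<otimes>\<^bsub>A\<^esub> y"
  have inj: "inj_on ?f (B1 \<times> B2)"
  proof (rule inj_onI, clarsimp)
    fix x y x' y' assume x: "x \<in> B1" "x' \<in> B1" and y: "y \<in> B2" "y' \<in> B2"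
      and e: "x \<otimes>\<^bsub>A\<^esub> y = x' \<otimes>\<^bsub>A\<^esub> y'"
    have xc: "x \<in> carrier A" "x' \<in> carrier A" using x sub1 by auto
    have yc: "y \<in> carrier A" "y' \<in> carrier A" using y sub2 by auto
    define z where "z = inv\<^bsub>A\<^esub> x' \<otimes>\<^bsub>A\<^esub> x"
    have zB1: "z \<in> B1" unfolding z_def using x s1 by (simp add: subgroup.m_closed subgroup.m_inv_closed)
    have "z \<otimes>\<^bsub>A\<^esub> y = inv\<^bsub>A\<^esub> x' \<otimes>\<^bsub>A\<^esub> (x \<otimes>\<^bsub>A\<^esub> y)" unfolding z_def using xc yc by (simp add: A.m_assoc)
    also have "\<dots> = y'" using e xc yc by (simp add: A.m_assoc[symmetric])
    finally have zy: "z \<otimes>\<^bsub>A\<^esub> y = y'" .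
    have zc: "z \<in> carrier A" using zB1 sub1 by auto
    have "z = y' \<otimes>\<^bsub>A\<^esub> inv\<^bsub>A\<^esub> y" using zy zc yc by (metis A.inv_solve_right)
    hence "z \<in> B2" using y s2 by (simp add: subgroup.m_closed subgroup.m_inv_closed)
    hence z1: "z = \<one>\<^bsub>A\<^esub>" using triv zB1 by blast
    hence "x = x'" unfolding z_def using xc by (metis A.inv_equality A.inv_inv A.inv_closed)
    moreover have "y = y'" using zy z1 yc by simp
    ultimately show "x = x' \<and> y = y'" by simp
  qed
  have img: "?f ` (B1 \<times> B2) \<subseteq> carrier A" using sub1 sub2 by auto
  have "card (B1 \<times> B2) \<le> card (carrier A)" using card_inj_on_le[OF inj img finA] .
  hence le: "card B1 * card B2 \<le> card (carrier A)" by (simp add: card_cartesian_product)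
  let ?c = "card (carrier A)"
  have "?c * ?c \<le> (p * card B1) * (p * card B2)" using c1 c2 by (rule mult_le_mono)
  also have "\<dots> = (p * p) * (card B1 * card B2)" by simp
  also have "\<dots> \<le> (p * p) * ?c" using le by simp
  finally have "?c * ?c \<le> (p * p) * ?c" .
  moreover have "?c > 0" using finA A.one_closed card_gt_0_iff by blast
  ultimately have "?c \<le> p * p" by simp
  moreover have "p * p < p ^ 3" using p1 by (simp add: power3_eq_cube)
  ultimately show False using cardA by simp
qed

lemma K_gens_sub: "(\<Union>B\<in>Hyp. fixed_points G phi B (carrier G)) \<subseteq> carrier G"
  by (auto simp: fixed_points_def)

lemma K_subgroup: "subgroup K G"
  unfolding K_def using G.generate_is_subgroup[OF K_gens_sub] .

lemma K_comm: "u \<in> K \<Longrightarrow> v \<in> K \<Longrightarrow> u \<otimes>\<^bsub>G\<^esub> v = v \<otimes>\<^bsub>G\<^esub> u"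
  unfolding K_def
proof (rule G.gen_comm[OF K_gens_sub], intro ballI)
  fix s t assume s: "s \<in> (\<Union>B\<in>Hyp. fixed_points G phi B (carrier G))"
    and t: "t \<in> (\<Union>B\<in>Hyp. fixed_points G phi B (carrier G))"
  then obtain B1 B2 where B: "B1 \<in> Hyp" "B2 \<in> Hyp" and
    sB: "s \<in> fixed_points G phi B1 (carrier G)" and tB: "t \<in> fixed_points G phi B2 (carrier G)" by blast
  obtain a where a: "a \<in> B1" "a \<in> B2" "a \<noteq> \<one>\<^bsub>A\<^esub>" using hyp_meet[OF B] by blast
  have ac: "a \<in> carrier A" using a B by (auto simp: Hyp_def dest: subgroup.subset)
  let ?F = "fixed_points G phi {a} (carrier G)"
  have sF: "s \<in> ?F" and tF: "t \<in> ?F" using sB tB a by (auto simp: fixed_points_def)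
  interpret F: comm_group "G\<lparr>carrier := ?F\<rparr>" using cent ac a by blast
  show "s \<otimes>\<^bsub>G\<^esub> t = t \<otimes>\<^bsub>G\<^esub> s" using F.m_comm[of s t] sF tF by simp
qed

definition "inv_sub H \<longleftrightarrow> subgroup H G \<and> (\<forall>x\<in>carrier A. phi x ` H \<subseteq> H)"

lemma inv_sub_eq: "inv_sub H \<Longrightarrow> x \<in> carrier A \<Longrightarrow> phi x ` H = H"
proof -
  assume H: "inv_sub H" and x: "x \<in> carrier A"
  have Hc: "H \<subseteq> carrier G" using H by (auto simp: inv_sub_def dest: subgroup.subset)
  have fin: "finite H" using Hc finG finite_subset by blast
  have "card (phi x ` H) = card H" using card_image phi_inj[OF x] Hc inj_on_subset by metis
  moreover have "phi x ` H \<subseteq> H" using H x by (simp add: inv_sub_def)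
  ultimately show ?thesis using fin by (simp add: card_subset_eq)
qed

lemma gen_inv:
  assumes S: "S \<subseteq> carrier G" and x: "x \<in> carrier A" and inv: "\<forall>s\<in>S. phi x s \<in> generate G S"
  shows "phi x ` generate G S \<subseteq> generate G S"
proof
  fix g assume "g \<in> phi x ` generate G S"
  then obtain h where h: "h \<in> generate G S" and g: "g = phi x h" by blast
  have "phi x h \<in> generate G S" using h
  proof (induction rule: generate.induct)
    case one thus ?case using phi_one_G[OF x] generate.one by simp
  next
    case (incl h) thus ?case using inv by simp
  next
    case (inv h)
    have "phi x (inv\<^bsub>G\<^esub> h) = inv\<^bsub>G\<^esub> (phi x h)" using phi_inv[OF x] inv S by auto
    thus ?case using G.generate_m_inv_closed[OF S] inv.hyps \<open>\<forall>s\<in>S. phi x s \<in> generate G S\<close> by simp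
  next
    case (eng h1 h2)
    have "phi x (h1 \<otimes>\<^bsub>G\<^esub> h2) = phi x h1 \<otimes>\<^bsub>G\<^esub> phi x h2"
      using phi_mult[OF x] eng.hyps G.generate_in_carrier[OF S] by auto
    thus ?case using eng generate.eng by simp
  qed
  thus "g \<in> generate G S" using g by simp
qed

lemma fp_subgroup:
  assumes H: "subgroup H G" and B: "B \<subseteq> carrier A"
  shows "subgroup (fixed_points G phi B H) G"
proof (rule subgroup.intro)
  have Hc: "H \<subseteq> carrier G" using H subgroup.subset by auto
  show "fixed_points G phi B H \<subseteq> carrier G" using Hc by (auto simp: fixed_points_def)
  show "\<one>\<^bsub>G\<^esub> \<in> fixed_points G phi B H"
    using H B phi_one_G by (auto simp: fixed_points_def subgroup.one_closed)
  fix g h assume g: "g \<in> fixed_points G phi B H" and h: "h \<in> fixed_points G phi B H"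
  show "g \<otimes>\<^bsub>G\<^esub> h \<in> fixed_points G phi B H"
    using g h H B Hc phi_mult by (auto simp: fixed_points_def subgroup.m_closed subset_iff)
  show "inv\<^bsub>G\<^esub> g \<in> fixed_points G phi B H"
    using g H B Hc phi_inv by (auto simp: fixed_points_def subgroup.m_inv_closed subset_iff)
qed

lemma fp_inv_sub:
  assumes H: "inv_sub H" and B: "B \<subseteq> carrier A"
  shows "inv_sub (fixed_points G phi B H)" "fixed_points G phi B H \<subseteq> H"
proof -
  have Hs: "subgroup H G" and Hc: "H \<subseteq> carrier G" using H by (auto simp: inv_sub_def dest: subgroup.subset)
  show "fixed_points G phi B H \<subseteq> H" by (auto simp: fixed_points_def)
  show "inv_sub (fixed_points G phi B H)"
    unfolding inv_sub_def
  proof (intro conjI ballI subsetI)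
    show "subgroup (fixed_points G phi B H) G" by (rule fp_subgroup[OF Hs B])
    fix x g assume x: "x \<in> carrier A" and g: "g \<in> phi x ` fixed_points G phi B H"
    then obtain h where h: "h \<in> H" "\<forall>b\<in>B. phi b h = h" and gh: "g = phi x h" by (auto simp: fixed_points_def)
    have "g \<in> H" using H x h gh by (auto simp: inv_sub_def)
    moreover have "\<forall>b\<in>B. phi b g = g"
    proof
      fix b assume b: "b \<in> B"
      have bc: "b \<in> carrier A" using b B by auto
      have hc: "h \<in> carrier G" using h Hc by auto
      have "phi b (phi x h) = phi x (phi b h)" using phi_commute[OF x bc hc] by simp
      thus "phi b g = g" using h b gh by simp
    qed
    ultimately show "g \<in> fixed_points G phi B H" by (simp add: fixed_points_def)
  qed
qed

lemma comm_gens_sub: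
  assumes H: "inv_sub H" and B: "B \<subseteq> carrier A"
  shows "{inv\<^bsub>G\<^esub> h \<otimes>\<^bsub>G\<^esub> phi b h | h b. h \<in> H \<and> b \<in> B} \<subseteq> H"
  using H B by (auto simp: inv_sub_def subgroup.m_closed subgroup.m_inv_closed subset_iff)

lemma comm_inv_sub:
  assumes H: "inv_sub H" and B: "B \<subseteq> carrier A"
  shows "inv_sub (action_commutator G phi H B)" "action_commutator G phi H B \<subseteq> H"
proof -
  have Hs: "subgroup H G" and Hc: "H \<subseteq> carrier G" using H by (auto simp: inv_sub_def dest: subgroup.subset)
  let ?S = "{inv\<^bsub>G\<^esub> h \<otimes>\<^bsub>G\<^esub> phi b h | h b. h \<in> H \<and> b \<in> B}"
  have SH: "?S \<subseteq> H" by (rule comm_gens_sub[OF H B])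
  have Sc: "?S \<subseteq> carrier G" using SH Hc by blast
  show "action_commutator G phi H B \<subseteq> H"
    unfolding action_commutator_def by (rule G.generate_subgroup_incl[OF SH Hs])
  show "inv_sub (action_commutator G phi H B)"
    unfolding inv_sub_def action_commutator_def
  proof (intro conjI ballI)
    show "subgroup (generate G ?S) G" by (rule G.generate_is_subgroup[OF Sc])
    fix x assume x: "x \<in> carrier A"
    show "phi x ` generate G ?S \<subseteq> generate G ?S"
    proof (rule gen_inv[OF Sc x], intro ballI)
      fix s assume "s \<in> ?S"
      then obtain h b where hb: "h \<in> H" "b \<in> B" "s = inv\<^bsub>G\<^esub> h \<otimes>\<^bsub>G\<^esub> phi b h" by blast
      have hc: "h \<in> carrier G" using hb Hc by auto
      have bc: "b \<in> carrier A" using hb B by auto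
      have "phi x s = inv\<^bsub>G\<^esub> (phi x h) \<otimes>\<^bsub>G\<^esub> phi b (phi x h)"
        using hb hc bc x phi_mult phi_inv phi_closed phi_commute by simp
      moreover have "phi x h \<in> H" using H x hb by (auto simp: inv_sub_def)
      ultimately have "phi x s \<in> ?S" using hb by blast
      thus "phi x s \<in> generate G ?S" by (rule generate.incl)
    qed
  qed
qed

lemma key_claim:
  assumes H: "inv_sub H" and IH: "\<forall>H'. inv_sub H' \<longrightarrow> card H' < card H \<longrightarrow> H' \<subseteq> K"
    and nK: "\<not> H \<subseteq> K" and x: "x \<in> carrier A" and xT: "\<exists>h\<in>H. phi x h \<noteq> h"
  shows "action_commutator G phi H (generate A {x}) = H"
proof (rule ccontr)
  assume ne: "action_commutator G phi H (generate A {x}) \<noteq> H"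
  let ?B = "generate A {x}"
  let ?C = "action_commutator G phi H ?B"
  let ?F = "fixed_points G phi ?B H"
  have Bs: "subgroup ?B A" using A.generate_is_subgroup x by simp
  have Bc: "?B \<subseteq> carrier A" using Bs subgroup.subset by auto
  have xB: "x \<in> ?B" by (rule generate.incl) simp
  have Hs: "subgroup H G" and Hc: "H \<subseteq> carrier G" using H by (auto simp: inv_sub_def dest: subgroup.subset)
  have finH: "finite H" using Hc finG finite_subset by blast
  have Binv: "\<forall>b\<in>?B. phi b ` H \<subseteq> H" using H Bc by (auto simp: inv_sub_def)
  have dec: "H = ?C <#>\<^bsub>G\<^esub> ?F" using good Bs Hs Binv by (simp add: good_action_def)
  have CK: "?C \<subseteq> K"
  proof -
    have "?C \<subset> H" using comm_inv_sub(2)[OF H Bc] ne by blast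
    hence "card ?C < card H" using finH psubset_card_mono by blast
    thus ?thesis using IH comm_inv_sub(1)[OF H Bc] by blast
  qed
  have FK: "?F \<subseteq> K"
  proof -
    obtain h where h: "h \<in> H" "phi x h \<noteq> h" using xT by blast
    have "h \<notin> ?F" using h xB by (auto simp: fixed_points_def)
    hence "?F \<subset> H" using fp_inv_sub(2)[OF H Bc] h by blast
    hence "card ?F < card H" using finH psubset_card_mono by blast
    thus ?thesis using IH fp_inv_sub(1)[OF H Bc] by blast
  qed
  have "?C <#>\<^bsub>G\<^esub> ?F \<subseteq> K"
    using CK FK K_subgroup by (auto simp: set_mult_def intro: subgroup.m_closed)
  thus False using dec nK by simp
qed

end



context main_ctx begin

lemma gen_single_pow:
  assumes c: "c \<in> carrier A" and y: "y \<in> generate A {c}"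
  shows "\<exists>n::nat. y = c [^]\<^bsub>A\<^esub> n"
  using y
proof (induction rule: generate.induct)
  case one show ?case by (rule exI[of _ 0]) simp
next
  case (incl h) thus ?case using c by (intro exI[of _ 1]) simp
next
  case (inv h)
  have hc: "h = c" using inv by simp
  have "c [^]\<^bsub>A\<^esub> (p - 1) \<otimes>\<^bsub>A\<^esub> c = c [^]\<^bsub>A\<^esub> (Suc (p - 1))" by simp
  also have "Suc (p - 1) = p" using p0 by simp
  finally have "c [^]\<^bsub>A\<^esub> (p - 1) \<otimes>\<^bsub>A\<^esub> c = \<one>\<^bsub>A\<^esub>" using expA c by simp
  hence "inv\<^bsub>A\<^esub> c = c [^]\<^bsub>A\<^esub> (p - 1)" using c by (intro A.inv_equality) auto
  thus ?case using hc by blast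
next
  case (eng h1 h2)
  then obtain m n where "h1 = c [^]\<^bsub>A\<^esub> (m::nat)" "h2 = c [^]\<^bsub>A\<^esub> (n::nat)" by blast
  hence "h1 \<otimes>\<^bsub>A\<^esub> h2 = c [^]\<^bsub>A\<^esub> (m + n)" using c by (simp add: A.nat_pow_mult)
  thus ?case by blast
qed

end

locale quot_ctx = main_ctx +
  fixes H assumes H: "inv_sub H"
begin

abbreviation "Hg \<equiv> G\<lparr>carrier := H\<rparr>"
abbreviation "N \<equiv> derived G H"
abbreviation "Q \<equiv> Hg Mod N"
definition "qpi h = N #>\<^bsub>Hg\<^esub> h"
definition qpsi where "qpsi = (\<lambda>x S. image (phi x) S)"

lemma Hs: "subgroup H G" using H by (simp add: inv_sub_def)
lemma Hc: "H \<subseteq> carrier G" using Hs subgroup.subset by auto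
lemma finH: "finite H" using Hc finG finite_subset by blast

lemma Hgrp: "group Hg" using G.subgroup_imp_group[OF Hs] .
lemma Nnorm: "N \<lhd> Hg" using G.derived_subgroup_is_normal[OF Hs] .
lemma Qcomm: "comm_group Q" using G.derived_quot_of_subgroup_is_comm_group[OF Hs] .
lemma NH: "N \<subseteq> H" using G.derived_incl[OF _ Hs] by simp

sublocale Hgr: group Hg by (rule Hgrp)
sublocale Nn: normal N Hg by (rule Nnorm)
sublocale Qg: comm_group Q by (rule Qcomm)

lemma pi_hom: "qpi \<in> hom Hg Q"
  unfolding qpi_def using Nn.r_coset_hom_Mod by simp

sublocale pih: group_hom Hg Q qpi
  using pi_hom by (simp add: group_hom_def group_hom_axioms_def Hgrp Qg.is_group)

lemma carrierQ: "carrier Q = qpi ` H"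
  unfolding qpi_def by (simp add: carrier_FactGroup)

lemma pi_mult: "h \<in> H \<Longrightarrow> k \<in> H \<Longrightarrow> qpi (h \<otimes>\<^bsub>G\<^esub> k) = qpi h \<otimes>\<^bsub>Q\<^esub> qpi k"
  using pih.hom_mult[of h k] by simp

lemma pi_inv: "h \<in> H \<Longrightarrow> qpi (inv\<^bsub>G\<^esub> h) = inv\<^bsub>Q\<^esub> (qpi h)"
  using pih.hom_inv[of h] G.m_inv_consistent[OF Hs] by simp

lemma pi_one: "qpi \<one>\<^bsub>G\<^esub> = \<one>\<^bsub>Q\<^esub>"
  using pih.hom_one by simp

lemma pi_closed: "h \<in> H \<Longrightarrow> qpi h \<in> carrier Q"
  using carrierQ by simp

lemma pi_eq_one: "h \<in> H \<Longrightarrow> qpi h = \<one>\<^bsub>Q\<^esub> \<Longrightarrow> h \<in> N"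
proof -
  assume h: "h \<in> H" and e: "qpi h = \<one>\<^bsub>Q\<^esub>"
  have "h \<in> N #>\<^bsub>Hg\<^esub> h" using Hgr.rcos_self[of h N] h Nn.subgroup_axioms by simp
  thus ?thesis using e by (simp add: qpi_def)
qed

lemma N_inv_sub: "inv_sub N"
  unfolding inv_sub_def
proof (intro conjI ballI)
  show "subgroup N G" using G.derived_is_subgroup[OF Hc] .
  fix x assume x: "x \<in> carrier A"
  show "phi x ` N \<subseteq> N"
    unfolding derived_def
  proof (rule gen_inv[OF G.derived_set_in_carrier[OF Hc] x], intro ballI)
    fix s assume "s \<in> derived_set G H"
    then obtain h1 h2 where h: "h1 \<in> H" "h2 \<in> H" and s: "s = h1 \<otimes>\<^bsub>G\<^esub> h2 \<otimes>\<^bsub>G\<^esub> inv\<^bsub>G\<^esub> h1 \<otimes>\<^bsub>G\<^esub> inv\<^bsub>G\<^esub> h2"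
      by blast
    have hc: "h1 \<in> carrier G" "h2 \<in> carrier G" using h Hc by auto
    have "phi x s = phi x h1 \<otimes>\<^bsub>G\<^esub> phi x h2 \<otimes>\<^bsub>G\<^esub> inv\<^bsub>G\<^esub> (phi x h1) \<otimes>\<^bsub>G\<^esub> inv\<^bsub>G\<^esub> (phi x h2)"
      using s hc x by (simp add: phi_mult phi_inv phi_closed)
    moreover have "phi x h1 \<in> H" "phi x h2 \<in> H" using H x h by (auto simp: inv_sub_def)
    ultimately have "phi x s \<in> derived_set G H" by blast
    thus "phi x s \<in> generate G (derived_set G H)" by (rule generate.incl)
  qed
qed

lemma phi_N: "x \<in> carrier A \<Longrightarrow> phi x ` N = N"
  using inv_sub_eq[OF N_inv_sub] .

lemma phiH: "x \<in> carrier A \<Longrightarrow> h \<in> H \<Longrightarrow> phi x h \<in> H"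
  using H by (auto simp: inv_sub_def)

lemma psi_pi: "x \<in> carrier A \<Longrightarrow> h \<in> H \<Longrightarrow> qpsi x (qpi h) = qpi (phi x h)"
proof -
  assume x: "x \<in> carrier A" and h: "h \<in> H"
  have hc: "h \<in> carrier G" using h Hc by auto
  have "phi x ` (N #>\<^bsub>Hg\<^esub> h) = (phi x ` N) #>\<^bsub>Hg\<^esub> phi x h"
    using NH Hc hc x by (force simp: r_coset_def phi_mult)
  thus ?thesis using phi_N[OF x] by (simp add: qpsi_def qpi_def)
qed

lemma Q_elem: "U \<in> carrier Q \<Longrightarrow> \<exists>h\<in>H. U = qpi h"
  using carrierQ by auto

lemma finQ: "finite (carrier Q)" using carrierQ finH by simp

lemma psi_act: "psi_act Q A qpsi p"
proof (intro psi_act.intro psi_act_axioms.intro)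
  show "comm_group Q" by (rule Qcomm)
  show "comm_group A" by unfold_locales
  show "finite (carrier Q)" by (rule finQ)
  show "Factorial_Ring.prime p" by (rule p)
  show "\<forall>x\<in>carrier A. x [^]\<^bsub>A\<^esub> p = \<one>\<^bsub>A\<^esub>" by (rule expA)
  show "\<forall>x\<in>carrier A. qpsi x \<in> hom Q Q"
  proof
    fix x assume x: "x \<in> carrier A"
    show "qpsi x \<in> hom Q Q"
    proof (rule homI)
      fix U assume "U \<in> carrier Q"
      then obtain h where h: "h \<in> H" "U = qpi h" using Q_elem by blast
      have "qpsi x U = qpi (phi x h)" using psi_pi[OF x h(1)] h(2) by simp
      thus "qpsi x U \<in> carrier Q" using pi_closed[OF phiH[OF x h(1)]] by simp
    next
      fix U W assume U: "U \<in> carrier Q" and W: "W \<in> carrier Q"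
      obtain h where h: "h \<in> H" "U = qpi h" using Q_elem[OF U] by blast
      obtain k where k: "k \<in> H" "W = qpi k" using Q_elem[OF W] by blast
      have hk: "h \<otimes>\<^bsub>G\<^esub> k \<in> H" using subgroup.m_closed[OF Hs h(1) k(1)] .
      have "U \<otimes>\<^bsub>Q\<^esub> W = qpi (h \<otimes>\<^bsub>G\<^esub> k)" using pi_mult[OF h(1) k(1)] h(2) k(2) by simp
      hence "qpsi x (U \<otimes>\<^bsub>Q\<^esub> W) = qpi (phi x (h \<otimes>\<^bsub>G\<^esub> k))"
        using psi_pi[OF x hk] by simp
      also have "phi x (h \<otimes>\<^bsub>G\<^esub> k) = phi x h \<otimes>\<^bsub>G\<^esub> phi x k"
        using phi_mult[OF x, of h k] h(1) k(1) Hc by auto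
      also have "qpi (phi x h \<otimes>\<^bsub>G\<^esub> phi x k) = qpi (phi x h) \<otimes>\<^bsub>Q\<^esub> qpi (phi x k)"
        by (rule pi_mult[OF phiH[OF x h(1)] phiH[OF x k(1)]])
      also have "\<dots> = qpsi x U \<otimes>\<^bsub>Q\<^esub> qpsi x W" using psi_pi[OF x h(1)] psi_pi[OF x k(1)] h(2) k(2) by simp
      finally show "qpsi x (U \<otimes>\<^bsub>Q\<^esub> W) = qpsi x U \<otimes>\<^bsub>Q\<^esub> qpsi x W" .
    qed
  qed
  show "\<forall>x\<in>carrier A. \<forall>y\<in>carrier A. \<forall>q\<in>carrier Q. qpsi (x \<otimes>\<^bsub>A\<^esub> y) q = qpsi x (qpsi y q)"
  proof (intro ballI)
    fix x y U assume x: "x \<in> carrier A" and y: "y \<in> carrier A" and "U \<in> carrier Q"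
    then obtain h where h: "h \<in> H" "U = qpi h" using Q_elem by blast
    have hc: "h \<in> carrier G" using h Hc by auto
    have xy: "x \<otimes>\<^bsub>A\<^esub> y \<in> carrier A" using x y by simp
    have "qpsi (x \<otimes>\<^bsub>A\<^esub> y) U = qpi (phi (x \<otimes>\<^bsub>A\<^esub> y) h)" using psi_pi[OF xy h(1)] h(2) by simp
    also have "\<dots> = qpi (phi x (phi y h))" using phi_comp[OF x y hc] by simp
    also have "\<dots> = qpsi x (qpi (phi y h))" using psi_pi[OF x phiH[OF y h(1)]] by simp
    also have "\<dots> = qpsi x (qpsi y U)" using psi_pi[OF y h(1)] h(2) by simp
    finally show "qpsi (x \<otimes>\<^bsub>A\<^esub> y) U = qpsi x (qpsi y U)" .
  qed
  show "\<forall>q\<in>carrier Q. qpsi \<one>\<^bsub>A\<^esub> q = q"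
  proof
    fix U assume "U \<in> carrier Q"
    then obtain h where h: "h \<in> H" "U = qpi h" using Q_elem by blast
    have hc: "h \<in> carrier G" using h Hc by auto
    have "qpsi \<one>\<^bsub>A\<^esub> U = qpi (phi \<one>\<^bsub>A\<^esub> h)" using psi_pi[OF A.one_closed h(1)] h(2) by simp
    thus "qpsi \<one>\<^bsub>A\<^esub> U = U" using phi_one[OF hc] h(2) by simp
  qed
qed

declare mult_FactGroup[simp del]

lemma fpf_from_comm:
  assumes c: "c \<in> carrier A" and cc: "action_commutator G phi H (generate A {c}) = H"
  shows "\<forall>U\<in>carrier Q. qpsi c U = U \<longrightarrow> U = \<one>\<^bsub>Q\<^esub>"
proof -
  interpret P: psi_act Q A qpsi p by (rule psi_act)
  define \<delta> where "\<delta> U = inv\<^bsub>Q\<^esub> U \<otimes>\<^bsub>Q\<^esub> qpsi c U" for U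
  have psic: "U \<in> carrier Q \<Longrightarrow> qpsi c U \<in> carrier Q" for U using P.psi_closed[OF c] .
  have dhom: "\<delta> \<in> hom Q Q"
  proof (rule homI)
    fix U assume "U \<in> carrier Q" thus "\<delta> U \<in> carrier Q" using psic by (simp add: \<delta>_def)
  next
    fix U W assume U: "U \<in> carrier Q" and W: "W \<in> carrier Q"
    have "\<delta> (U \<otimes>\<^bsub>Q\<^esub> W) = (inv\<^bsub>Q\<^esub> U \<otimes>\<^bsub>Q\<^esub> inv\<^bsub>Q\<^esub> W) \<otimes>\<^bsub>Q\<^esub> (qpsi c U \<otimes>\<^bsub>Q\<^esub> qpsi c W)"
      using U W by (simp add: \<delta>_def Qg.inv_mult P.psi_mult[OF c])
    also have "\<dots> = \<delta> U \<otimes>\<^bsub>Q\<^esub> \<delta> W" using U W psic by (simp add: \<delta>_def Qg.m_ac)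
    finally show "\<delta> (U \<otimes>\<^bsub>Q\<^esub> W) = \<delta> U \<otimes>\<^bsub>Q\<^esub> \<delta> W" .
  qed
  interpret dh: group_hom Q Q \<delta> using dhom by (simp add: group_hom_def group_hom_axioms_def Qg.is_group)
  let ?D = "\<delta> ` carrier Q"
  have Dsub: "subgroup ?D Q" by (rule dh.img_is_subgroup)
  have dpi: "\<delta> (qpi h) = qpi (inv\<^bsub>G\<^esub> h \<otimes>\<^bsub>G\<^esub> phi c h)" if h: "h \<in> H" for h
  proof -
    have ih: "inv\<^bsub>G\<^esub> h \<in> H" using subgroup.m_inv_closed[OF Hs h] .
    have "\<delta> (qpi h) = qpi (inv\<^bsub>G\<^esub> h) \<otimes>\<^bsub>Q\<^esub> qpi (phi c h)"
      using psi_pi[OF c h] pi_inv[OF h] by (simp add: \<delta>_def)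
    also have "\<dots> = qpi (inv\<^bsub>G\<^esub> h \<otimes>\<^bsub>G\<^esub> phi c h)" using pi_mult[OF ih phiH[OF c h]] by simp
    finally show ?thesis .
  qed
  have powD: "qpi (inv\<^bsub>G\<^esub> h \<otimes>\<^bsub>G\<^esub> phi (c [^]\<^bsub>A\<^esub> (n::nat)) h) \<in> ?D" if h: "h \<in> H" for h n
  proof (induction n)
    case 0
    have hc: "h \<in> carrier G" using h Hc by auto
    have "qpi (inv\<^bsub>G\<^esub> h \<otimes>\<^bsub>G\<^esub> phi (c [^]\<^bsub>A\<^esub> (0::nat)) h) = \<one>\<^bsub>Q\<^esub>"
      using phi_one[OF hc] hc pi_one by simp
    thus ?case using subgroup.one_closed[OF Dsub] by simp
  next
    case (Suc n)
    have cn: "c [^]\<^bsub>A\<^esub> n \<in> carrier A" using c by simp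
    define h' where "h' = phi (c [^]\<^bsub>A\<^esub> n) h"
    have h'H: "h' \<in> H" unfolding h'_def using phiH[OF cn h] .
    have hc: "h \<in> carrier G" and h'c: "h' \<in> carrier G" using h h'H Hc by auto
    have e1: "phi (c [^]\<^bsub>A\<^esub> Suc n) h = phi c h'"
      unfolding h'_def using phi_comp[OF c cn hc] c by (simp add: A.m_comm)
    have ih: "inv\<^bsub>G\<^esub> h \<in> H" using subgroup.m_inv_closed[OF Hs h] .
    have ih': "inv\<^bsub>G\<^esub> h' \<in> H" using subgroup.m_inv_closed[OF Hs h'H] .
    have m1: "inv\<^bsub>G\<^esub> h \<otimes>\<^bsub>G\<^esub> h' \<in> H" using subgroup.m_closed[OF Hs ih h'H] .
    have m2: "inv\<^bsub>G\<^esub> h' \<otimes>\<^bsub>G\<^esub> phi c h' \<in> H" using subgroup.m_closed[OF Hs ih' phiH[OF c h'H]] .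
    have "inv\<^bsub>G\<^esub> h \<otimes>\<^bsub>G\<^esub> phi c h' = (inv\<^bsub>G\<^esub> h \<otimes>\<^bsub>G\<^esub> h') \<otimes>\<^bsub>G\<^esub> (inv\<^bsub>G\<^esub> h' \<otimes>\<^bsub>G\<^esub> phi c h')"
    proof -
      have y: "phi c h' \<in> carrier G" using phi_closed[OF c h'c] .
      have "h' \<otimes>\<^bsub>G\<^esub> (inv\<^bsub>G\<^esub> h' \<otimes>\<^bsub>G\<^esub> phi c h') = phi c h'"
        using h'c y by (simp add: G.m_assoc[symmetric])
      thus ?thesis using hc h'c y by (simp add: G.m_assoc)
    qed
    hence "qpi (inv\<^bsub>G\<^esub> h \<otimes>\<^bsub>G\<^esub> phi (c [^]\<^bsub>A\<^esub> Suc n) h) = qpi (inv\<^bsub>G\<^esub> h \<otimes>\<^bsub>G\<^esub> h') \<otimes>\<^bsub>Q\<^esub> \<delta> (qpi h')"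
      using e1 pi_mult[OF m1 m2] dpi[OF h'H] by simp
    moreover have "qpi (inv\<^bsub>G\<^esub> h \<otimes>\<^bsub>G\<^esub> h') \<in> ?D" using Suc.IH h'_def by simp
    moreover have "\<delta> (qpi h') \<in> ?D" using pi_closed[OF h'H] by simp
    ultimately show ?case using subgroup.m_closed[OF Dsub] by simp
  qed
  let ?S = "{inv\<^bsub>G\<^esub> h \<otimes>\<^bsub>G\<^esub> phi b h | h b. h \<in> H \<and> b \<in> generate A {c}}"
  have Bc: "generate A {c} \<subseteq> carrier A" using A.generate_incl c by simp
  have SH: "?S \<subseteq> H" by (rule comm_gens_sub[OF H Bc])
  have genD: "g \<in> H \<and> qpi g \<in> ?D" if g: "g \<in> generate G ?S" for g
    using g
  proof (induction rule: generate.induct)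
    case one thus ?case using pi_one subgroup.one_closed[OF Dsub] subgroup.one_closed[OF Hs] by simp
  next
    case (incl s)
    then obtain h b where hb: "h \<in> H" "b \<in> generate A {c}" "s = inv\<^bsub>G\<^esub> h \<otimes>\<^bsub>G\<^esub> phi b h" by blast
    obtain n where "b = c [^]\<^bsub>A\<^esub> (n::nat)" using gen_single_pow[OF c hb(2)] by blast
    have "s \<in> H" using incl SH by blast
    thus ?case using hb powD[OF hb(1)] \<open>b = c [^]\<^bsub>A\<^esub> n\<close> by simp
  next
    case (inv s)
    have sH: "s \<in> H" using inv SH by auto
    have "qpi s \<in> ?D"
    proof -
      from inv obtain h b where hb: "h \<in> H" "b \<in> generate A {c}" "s = inv\<^bsub>G\<^esub> h \<otimes>\<^bsub>G\<^esub> phi b h" by blast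
      obtain n where "b = c [^]\<^bsub>A\<^esub> (n::nat)" using gen_single_pow[OF c hb(2)] by blast
      thus ?thesis using hb powD[OF hb(1)] by simp
    qed
    hence "inv\<^bsub>Q\<^esub> (qpi s) \<in> ?D" using subgroup.m_inv_closed[OF Dsub] by simp
    thus ?case using pi_inv[OF sH] subgroup.m_inv_closed[OF Hs sH] by simp
  next
    case (eng g1 g2)
    thus ?case using pi_mult subgroup.m_closed[OF Dsub] subgroup.m_closed[OF Hs] by simp
  qed
  have "carrier Q \<subseteq> ?D"
  proof
    fix U assume "U \<in> carrier Q"
    then obtain h where h: "h \<in> H" "U = qpi h" using Q_elem by blast
    have "h \<in> generate G ?S" using h cc by (simp add: action_commutator_def)
    thus "U \<in> ?D" using genD h by blast
  qed
  hence surj: "?D = carrier Q" using dh.hom_closed by blast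
  have inj: "inj_on \<delta> (carrier Q)" by (rule eq_card_imp_inj_on[OF finQ]) (simp add: surj)
  show ?thesis
  proof (intro ballI impI)
    fix U assume U: "U \<in> carrier Q" and e: "qpsi c U = U"
    have "\<delta> U = \<one>\<^bsub>Q\<^esub>" using U e unfolding \<delta>_def by (simp only: Qg.l_inv)
    hence "\<delta> U = \<delta> \<one>\<^bsub>Q\<^esub>" using dh.hom_one by simp
    thus "U = \<one>\<^bsub>Q\<^esub>" using inj_onD[OF inj _ U Qg.one_closed] by simp
  qed
qed

end



context quot_ctx begin

lemma derived_eq:
  assumes a: "a \<in> carrier A" and b: "b \<in> carrier A"
    and cb: "action_commutator G phi H (generate A {b}) = H"
    and cab: "\<forall>j<p. action_commutator G phi H (generate A {a \<otimes>\<^bsub>A\<^esub> b [^]\<^bsub>A\<^esub> j}) = H"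
  shows "derived G H = H"
proof -
  interpret P: psi_act Q A qpsi p by (rule psi_act)
  have fb: "P.fpf b" unfolding P.fpf_def using fpf_from_comm[OF b cb] .
  have fab: "\<forall>j<p. P.fpf (a \<otimes>\<^bsub>A\<^esub> b [^]\<^bsub>A\<^esub> j)"
  proof (intro allI impI)
    fix j assume j: "j < p"
    have c: "a \<otimes>\<^bsub>A\<^esub> b [^]\<^bsub>A\<^esub> j \<in> carrier A" using a b by simp
    show "P.fpf (a \<otimes>\<^bsub>A\<^esub> b [^]\<^bsub>A\<^esub> j)" unfolding P.fpf_def
      using fpf_from_comm[OF c] cab j by blast
  qed
  have triv: "carrier Q = {\<one>\<^bsub>Q\<^esub>}" by (rule P.trivial_Q[OF a b fb fab])
  have "H \<subseteq> N"
  proof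
    fix h assume h: "h \<in> H"
    have "qpi h = \<one>\<^bsub>Q\<^esub>" using pi_closed[OF h] triv by blast
    thus "h \<in> N" using pi_eq_one[OF h] by simp
  qed
  thus ?thesis using NH by blast
qed

end

context main_ctx begin

lemma all_in_K: "inv_sub H \<Longrightarrow> H \<subseteq> K"
proof (induction "card H" arbitrary: H rule: less_induct)
  case less
  note H = less.prems
  have IH: "\<forall>H'. inv_sub H' \<longrightarrow> card H' < card H \<longrightarrow> H' \<subseteq> K" using less.hyps by blast
  have Hs: "subgroup H G" and Hc: "H \<subseteq> carrier G" using H by (auto simp: inv_sub_def dest: subgroup.subset)
  show ?case
  proof (rule ccontr)
    assume nK: "\<not> H \<subseteq> K"
    define T where "T = {x \<in> carrier A. \<forall>h\<in>H. phi x h = h}"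
    have Tc: "T \<subseteq> carrier A" by (auto simp: T_def)
    have Ts: "subgroup T A"
    proof (rule subgroup.intro)
      show "T \<subseteq> carrier A" by (rule Tc)
      show "\<one>\<^bsub>A\<^esub> \<in> T" using phi_one Hc by (auto simp: T_def)
      fix x y assume x: "x \<in> T" and y: "y \<in> T"
      show "x \<otimes>\<^bsub>A\<^esub> y \<in> T" using x y Hc phi_comp by (auto simp: T_def subset_iff)
      show "inv\<^bsub>A\<^esub> x \<in> T" unfolding T_def
      proof (intro CollectI conjI ballI)
        have xc: "x \<in> carrier A" using x Tc by auto
        show "inv\<^bsub>A\<^esub> x \<in> carrier A" using xc by simp
        fix h assume h: "h \<in> H"
        have hc: "h \<in> carrier G" using h Hc by auto
        have "phi (inv\<^bsub>A\<^esub> x) h = phi (inv\<^bsub>A\<^esub> x) (phi x h)" using x h by (simp add: T_def)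
        also have "\<dots> = phi (inv\<^bsub>A\<^esub> x \<otimes>\<^bsub>A\<^esub> x) h" using phi_comp[OF A.inv_closed[OF xc] xc hc] by simp
        also have "\<dots> = h" using phi_one[OF hc] by (simp add: A.l_inv[OF xc])
        finally show "phi (inv\<^bsub>A\<^esub> x) h = h" .
      qed
    qed
    have notT: "\<exists>h\<in>H. phi x h \<noteq> h" if "x \<in> carrier A" "x \<notin> T" for x
      using that by (auto simp: T_def)
    show False
    proof (cases "card (carrier A) \<le> p * card T")
      case True
      hence "T \<in> Hyp" using Ts by (simp add: Hyp_def)
      hence "H \<subseteq> K"
        using Hc unfolding K_def by (auto simp: fixed_points_def T_def intro!: generate.incl)
      thus False using nK by simp
    next
      case False
      hence lt: "p * card T < card (carrier A)" by simp
      have finT: "finite T" using Tc finA finite_subset by blast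
      obtain b where b: "b \<in> carrier A" "b \<notin> T"
      proof -
        have "\<not> carrier A \<subseteq> T"
        proof
          assume "carrier A \<subseteq> T"
          hence "card (carrier A) \<le> card T" using finT card_mono by blast
          moreover have "card T \<le> p * card T" using p0 by simp
          ultimately show False using lt by linarith
        qed
        thus ?thesis using that by blast
      qed
      let ?Y = "(\<lambda>(t, i). t \<otimes>\<^bsub>A\<^esub> b [^]\<^bsub>A\<^esub> (i::nat)) ` (T \<times> {..<p})"
      have "card ?Y \<le> card (T \<times> {..<p})" by (rule card_image_le) (simp add: finT)
      also have "\<dots> = card T * p" by (simp add: card_cartesian_product)
      finally have "card ?Y < card (carrier A)" using lt by (simp add: mult.commute)
      then obtain a where a: "a \<in> carrier A" "a \<notin> ?Y"
      proof -
        have "\<not> carrier A \<subseteq> ?Y"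
        proof
          assume "carrier A \<subseteq> ?Y"
          hence "card (carrier A) \<le> card ?Y" using finT by (intro card_mono) auto
          thus False using \<open>card ?Y < card (carrier A)\<close> by simp
        qed
        thus ?thesis using that by blast
      qed
      have cb: "action_commutator G phi H (generate A {b}) = H"
        by (rule key_claim[OF H IH nK b(1) notT[OF b]])
      have cab: "\<forall>j<p. action_commutator G phi H (generate A {a \<otimes>\<^bsub>A\<^esub> b [^]\<^bsub>A\<^esub> j}) = H"
      proof (intro allI impI)
        fix j assume j: "j < p"
        have c: "a \<otimes>\<^bsub>A\<^esub> b [^]\<^bsub>A\<^esub> j \<in> carrier A" using a b by simp
        have "a \<otimes>\<^bsub>A\<^esub> b [^]\<^bsub>A\<^esub> j \<notin> T"
        proof
          assume t: "a \<otimes>\<^bsub>A\<^esub> b [^]\<^bsub>A\<^esub> j \<in> T"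
          show False
          proof (cases "j = 0")
            case True
            hence "a \<in> T" using t a by simp
            hence "a \<otimes>\<^bsub>A\<^esub> b [^]\<^bsub>A\<^esub> (0::nat) \<in> ?Y" using p0 by (intro image_eqI[of _ _ "(a, 0)"]) auto
            thus False using a by simp
          next
            case False
            have "(a \<otimes>\<^bsub>A\<^esub> b [^]\<^bsub>A\<^esub> j) \<otimes>\<^bsub>A\<^esub> b [^]\<^bsub>A\<^esub> (p - j) = a \<otimes>\<^bsub>A\<^esub> b [^]\<^bsub>A\<^esub> (j + (p - j))"
              using a b by (simp add: A.m_assoc A.nat_pow_mult)
            also have "j + (p - j) = p" using j by simp
            also have "a \<otimes>\<^bsub>A\<^esub> b [^]\<^bsub>A\<^esub> p = a" using expA a b by simp
            finally have "a \<in> ?Y" using t j False by (intro image_eqI[of _ _ "(a \<otimes>\<^bsub>A\<^esub> b [^]\<^bsub>A\<^esub> j, p - j)"]) auto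
            thus False using a by simp
          qed
        qed
        thus "action_commutator G phi H (generate A {a \<otimes>\<^bsub>A\<^esub> b [^]\<^bsub>A\<^esub> j}) = H"
          by (rule key_claim[OF H IH nK c notT[OF c]])
      qed
      interpret Qc: quot_ctx G A phi p H
        by (intro quot_ctx.intro quot_ctx_axioms.intro main_ctx_axioms) (simp_all add: H G.is_group A.comm_group_axioms)
      have NH: "derived G H = H" by (rule Qc.derived_eq[OF a(1) b(1) cb cab])
      have "(derived G ^^ n) H = H" for n by (induction n) (simp_all add: NH)
      moreover obtain n where "(derived G ^^ n) H = {\<one>\<^bsub>G\<^esub>}"
        using G.solvable_imp_trivial_derived_seq[OF G.solvable_subgroup[OF Hs solv]] by blast
      ultimately have "H = {\<one>\<^bsub>G\<^esub>}" by simp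
      moreover have "\<one>\<^bsub>G\<^esub> \<in> K" using subgroup.one_closed[OF K_subgroup] .
      ultimately show False using nK by simp
    qed
  qed
qed

end



theorem lemma3p1:
  fixes G :: "('a, 'c) monoid_scheme" and A :: "('b, 'd) monoid_scheme"
    and phi :: "'b \<Rightarrow> 'a \<Rightarrow> 'a" and p :: nat
  assumes "group G" and "finite (carrier G)" and "solvable G"
    and "comm_group A" and "finite (carrier A)" and "Factorial_Ring.prime p"
    and "\<forall>a \<in> carrier A. a [^]\<^bsub>A\<^esub> p = \<one>\<^bsub>A\<^esub>"
    and "card (carrier A) \<ge> p ^ 3"
    and "phi \<in> hom A (AutoGroup G)"
    and "good_action G A phi"
    and "\<forall>a \<in> carrier A. a \<noteq> \<one>\<^bsub>A\<^esub> \<longrightarrow>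
           comm_group (G\<lparr>carrier := fixed_points G phi {a} (carrier G)\<rparr>)"
  shows "comm_group G"
proof -
  interpret M: main_ctx G A phi p
    by (intro main_ctx.intro main_ctx_axioms.intro) (use assms in auto)
  have "M.inv_sub (carrier G)" unfolding M.inv_sub_def using M.G.subgroup_self M.phi_closed by auto
  hence sub: "carrier G \<subseteq> M.K" by (rule M.all_in_K)
  show ?thesis
    by (rule M.G.group_comm_groupI) (use M.K_comm sub in blast)
qed

end
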